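(* Let $J\subseteq[n]$ and let $\pi,\hat\pi\in S_J$ be joined by an edge of the bridge polytope $\mathrm{Br}_J$, where $\hat\pi=(i\,\ell)\pi$ for some $i<\ell$. Then each of $i+1,i+2,\dots,\ell-1$ is a fixed point of both $\pi$ and $\hat\pi$.
   Context: For $J\subseteq[n]$, $S_J=\{\pi\in S_n:\ \pi(j)\ge j \text{ for } j\in J,\ \pi(j)\le j \text{ for } j\notin J\}$ and $\mathrm{Br}_J=\operatorname{conv}\{(\pi(1),\dots,\pi(n)):\pi\in S_J\}\subset\mathbb{R}^n$, each $\pi\in S_J$ being identified with the vertex $(\pi(1),\dots,\pi(n))$. For a transposition $(i\,\ell)$, $(i\,\ell)\pi$ denotes $(i\,\ell)\circ\pi$, the permutation obtained from $\pi$ by swapping the values $i$ and $\ell$. *)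

theory Defs
  imports "HOL-Analysis.Analysis" "HOL-Combinatorics.Transposition"
begin

text \<open>The ground set [n] is modelled by a finite linearly ordered type 'n
  (so n = CARD('n)); a permutation of [n] is a function permuting UNIV.
  The k-th smallest element of 'n corresponds to the number k in [n].\<close>

definition num :: "'n::{finite,linorder} \<Rightarrow> nat" where
  "num x = card {y. y \<le> x}"

definition S_J :: "'n::{finite,linorder} set \<Rightarrow> ('n \<Rightarrow> 'n) set" where
  "S_J J = {p. p permutes (UNIV :: 'n set) \<and>
               (\<forall>j\<in>J. j \<le> p j) \<and> (\<forall>j. j \<notin> J \<longrightarrow> p j \<le> j)}"

definition vert :: "('n::{finite,linorder} \<Rightarrow> 'n) \<Rightarrow> real ^ ('n::{finite,linorder})" where
  "vert p = (\<chi> j. real (num (p j)))"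

definition Br :: "'n::{finite,linorder} set \<Rightarrow> (real ^ ('n::{finite,linorder})) set" where
  "Br J = convex hull (vert ` S_J J)"

definition joined_by_edge :: "'a::real_vector set \<Rightarrow> 'a \<Rightarrow> 'a \<Rightarrow> bool" where
  "joined_by_edge P a b \<longleftrightarrow> a \<noteq> b \<and> closed_segment a b face_of P"

end

theory Submission
  imports Defs
begin

lemma face_pull:
  fixes F S :: "'a::real_vector set"
  assumes "F face_of S" "x \<in> S" "y \<in> S" "0 < u" "u < 1" "u *\<^sub>R x + (1 - u) *\<^sub>R y \<in> F"
  shows "x \<in> F"
proof (cases "x = y")
  case True
  then show ?thesis using assms(6) by (simp add: scaleR_left_distrib[symmetric])
next
  case False
  have "u *\<^sub>R x + (1 - u) *\<^sub>R y \<in> open_segment y x"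
    unfolding in_segment using False assms(4,5) by (auto intro!: exI[of _ u])
  then show ?thesis using face_ofD[OF assms(1) _ assms(3,2,6)] by blast
qed

lemma num_less: "(x::'n::{finite,linorder}) < y \<Longrightarrow> num x < num y"
proof -
  assume a: "x < y"
  have "{z. z \<le> x} \<subset> {z. z \<le> y}"
  proof
    show "{z. z \<le> x} \<subseteq> {z. z \<le> y}" using a by auto
    show "{z. z \<le> x} \<noteq> {z. z \<le> y}" using a by (metis mem_Collect_eq order_refl not_le)
  qed
  then show ?thesis unfolding num_def by (intro psubset_card_mono) auto
qed

lemma num_less_iff: "num (x::'n::{finite,linorder}) < num y \<longleftrightarrow> x < y"
  by (metis linorder_neq_iff num_less order_less_asym)

lemma num_le_iff: "num (x::'n::{finite,linorder}) \<le> num y \<longleftrightarrow> x \<le> y"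
  by (meson linorder_not_le num_less_iff)

lemma num_eq_iff: "num (x::'n::{finite,linorder}) = num y \<longleftrightarrow> x = y"
  by (metis linorder_neq_iff num_less_iff)

definition acc :: "'n::{finite,linorder} set \<Rightarrow> 'n \<Rightarrow> 'n \<Rightarrow> bool" where
  "acc J z v \<longleftrightarrow> (z \<in> J \<longrightarrow> z \<le> v) \<and> (z \<notin> J \<longrightarrow> v \<le> z)"

lemma S_J_acc: "p \<in> S_J J \<Longrightarrow> acc J z (p z)"
  unfolding S_J_def acc_def by auto

lemma S_J_swap:
  assumes "p \<in> S_J J" "acc J x (p y)" "acc J y (p x)"
  shows "p \<circ> Transposition.transpose x y \<in> S_J J"
proof -
  have "p permutes UNIV" using assms(1) by (simp add: S_J_def)
  then have "p \<circ> Transposition.transpose x y permutes UNIV"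
    by (intro permutes_compose permutes_swap_id) auto
  moreover have "acc J z ((p \<circ> Transposition.transpose x y) z)" for z
    using assms S_J_acc[OF assms(1), of z] by (auto simp: Transposition.transpose_def)
  ultimately show ?thesis unfolding S_J_def acc_def by auto
qed

lemma vert_in: "r \<in> S_J J \<Longrightarrow> vert r \<in> Br J"
  unfolding Br_def by (intro hull_inc imageI)

lemma not_in_seg:
  assumes "q x = p x" "r x \<noteq> p x"
  shows "vert r \<notin> closed_segment (vert p) (vert q)"
proof
  assume "vert r \<in> closed_segment (vert p) (vert q)"
  then obtain u where "vert r = (1 - u) *\<^sub>R vert p + u *\<^sub>R vert q" by (auto simp: in_segment)
  then have "vert r $ x = (1 - u) * vert p $ x + u * vert q $ x" by simp
  then have "real (num (r x)) = real (num (p x))" using assms(1) by (simp add: vert_def algebra_simps)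
  then show False using assms(2) num_eq_iff by (metis of_nat_eq_iff)
qed

lemma face_contra:
  assumes face: "closed_segment (vert p) (vert q) face_of Br J"
    and r: "r \<in> S_J J" and s: "s \<in> S_J J" and Y: "Y \<in> Br J"
    and lam: "0 < lam" "lam < 1"
    and eq: "lam *\<^sub>R ((1/2) *\<^sub>R (vert r + vert s)) + (1 - lam) *\<^sub>R Y = (1/2) *\<^sub>R (vert p + vert q)"
    and nr: "vert r \<notin> closed_segment (vert p) (vert q)"
  shows False
proof -
  let ?X = "(1/2) *\<^sub>R (vert r + vert s)"
  have cv: "convex (Br J)" unfolding Br_def by simp
  have X: "?X \<in> Br J"
    using convexD[OF cv vert_in[OF r] vert_in[OF s], of "1/2" "1/2"] by (simp add: scaleR_add_right)
  have M: "(1/2) *\<^sub>R (vert p + vert q) \<in> closed_segment (vert p) (vert q)"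
    unfolding in_segment by (auto intro!: exI[of _ "1/2"] simp: scaleR_add_right)
  have "?X \<in> closed_segment (vert p) (vert q)"
    using face_pull[OF face X Y lam] eq M by simp
  then have "(1/2) *\<^sub>R vert r + (1 - 1/2) *\<^sub>R vert s \<in> closed_segment (vert p) (vert q)"
    by (simp add: scaleR_add_right)
  then have "vert r \<in> closed_segment (vert p) (vert q)"
    using face_pull[OF face vert_in[OF r] vert_in[OF s], of "1/2"] by simp
  with nr show False by blast
qed

lemma caseA:
  assumes face: "closed_segment (vert p) (vert q) face_of Br J"
    and p: "p \<in> S_J J" and q: "q \<in> S_J J" and qdef: "q = Transposition.transpose i l \<circ> p"
    and il: "i < l" and pa: "p a = i" and pb: "p b = l"
    and ca: "c \<noteq> a" and cb: "c \<noteq> b" and ic: "i < p c" and cl: "p c < l"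
    and aa: "acc J a (p c)" and ba: "acc J b (p c)" and ci: "acc J c i" and cl': "acc J c l"
  shows False
proof -
  have ab: "a \<noteq> b" using pa pb il by auto
  have qa: "q a = l" and qb: "q b = i" and qc: "q c = p c"
    using pa pb ic cl by (auto simp: qdef Transposition.transpose_def)
  define r where "r = p \<circ> Transposition.transpose a c"
  define s where "s = q \<circ> Transposition.transpose b c"
  define r' where "r' = p \<circ> Transposition.transpose b c"
  define s' where "s' = q \<circ> Transposition.transpose a c"
  have r: "r \<in> S_J J" unfolding r_def by (rule S_J_swap[OF p]) (use aa ci pa in auto)
  have s: "s \<in> S_J J" unfolding s_def by (rule S_J_swap[OF q]) (use ba ci qb qc in auto)
  have r': "r' \<in> S_J J" unfolding r'_def by (rule S_J_swap[OF p]) (use ba cl' pb in auto)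
  have s': "s' \<in> S_J J" unfolding s'_def by (rule S_J_swap[OF q]) (use aa cl' qa qc in auto)
  define Y where "Y = (1/2) *\<^sub>R (vert r' + vert s')"
  have cv: "convex (Br J)" unfolding Br_def by simp
  have Y: "Y \<in> Br J" unfolding Y_def
    using convexD[OF cv vert_in[OF r'] vert_in[OF s'], of "1/2" "1/2"] by (simp add: scaleR_add_right)
  define I where "I = real (num i)"
  define L where "L = real (num l)"
  define C where "C = real (num (p c))"
  have IC: "I < C" and CL: "C < L" using ic cl num_less unfolding I_def C_def L_def by auto
  define lam where "lam = (L - C) / (L - I)"
  have lam: "0 < lam" "lam < 1" using IC CL unfolding lam_def by (auto simp: field_simps)
  have eq: "lam *\<^sub>R ((1/2) *\<^sub>R (vert r + vert s)) + (1 - lam) *\<^sub>R Y = (1/2) *\<^sub>R (vert p + vert q)"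
  proof (rule vec_eq_iff[THEN iffD2], rule allI)
    fix j
    have LI: "L - I \<noteq> 0" using IC CL by simp
    have l1: "lam * (L - I) = L - C" unfolding lam_def using LI by simp
    then have l2: "lam * L - lam * I = L - C" by (simp add: algebra_simps)
    have key: "lam * C + lam * L + (I + C) - lam * I - lam * C = I + L"
      using l2 by linarith
    consider "j = a" | "j = b" | "j = c" | "j \<noteq> a \<and> j \<noteq> b \<and> j \<noteq> c" by blast
    then show "(lam *\<^sub>R ((1/2) *\<^sub>R (vert r + vert s)) + (1 - lam) *\<^sub>R Y) $ j = ((1/2) *\<^sub>R (vert p + vert q)) $ j"
    proof cases
      case 1
      then show ?thesis using ab ca cb pa pb qa qb qc key
        unfolding Y_def r_def s_def r'_def s'_def
        by (simp add: vert_def Transposition.transpose_def I_def[symmetric] L_def[symmetric] C_def[symmetric] algebra_simps) (simp add: field_simps)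
    next
      case 2
      then show ?thesis using ab ca cb pa pb qa qb qc key
        unfolding Y_def r_def s_def r'_def s'_def
        by (simp add: vert_def Transposition.transpose_def I_def[symmetric] L_def[symmetric] C_def[symmetric] algebra_simps) (simp add: field_simps)
    next
      case 3
      then show ?thesis using ab ca cb pa pb qa qb qc l2
        unfolding Y_def r_def s_def r'_def s'_def
        by (simp add: vert_def Transposition.transpose_def I_def[symmetric] L_def[symmetric] C_def[symmetric] algebra_simps)
    next
      case 4
      have injp: "inj p" using p unfolding S_J_def by (auto intro: permutes_inj)
      have "p j \<noteq> i" "p j \<noteq> l" using 4 pa pb injD[OF injp] by metis+
      then have "q j = p j" unfolding qdef Transposition.transpose_def by simp
      then show ?thesis using 4
        unfolding Y_def r_def s_def r'_def s'_def
        by (simp add: vert_def Transposition.transpose_def algebra_simps)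
    qed
  qed
  have nr: "vert r \<notin> closed_segment (vert p) (vert q)"
    by (rule not_in_seg[of q c p]) (use qc ic pa in \<open>auto simp: r_def Transposition.transpose_def\<close>)
  show False by (rule face_contra[OF face r s Y lam eq nr])
qed

lemma comb_aux:
  fixes al be de lam mu S A B C D :: real
  assumes S: "S \<noteq> 0" and f1: "lam = de * be / S" and f2: "(1 - lam) * mu = al * de / S"
    and f3: "(1 - lam) * (1 - mu) = al * be / S" and P: "de * be * A + al * de * B + al * be * C = D * S"
  shows "lam * A + (1 - lam) * (mu * B + (1 - mu) * C) = D"
proof -
  have "lam * A + (1 - lam) * (mu * B + (1 - mu) * C) = lam * A + ((1 - lam) * mu) * B + ((1 - lam) * (1 - mu)) * C"
    by (simp add: algebra_simps)
  also have "\<dots> = (de * be * A + al * de * B + al * be * C) / S"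
    by (subst f2, subst f3, simp add: f1 add_divide_distrib)
  also have "\<dots> = D" using P S by simp
  finally show ?thesis .
qed

lemma weights:
  fixes al be de :: real
  assumes pos: "al > 0" "be > 0" "de > 0"
  defines "S \<equiv> de * be + de * al + al * be"
  defines "mu \<equiv> de / (de + be)" and "lam \<equiv> de * be / S"
  shows "S \<noteq> 0" "(1 - lam) * mu = al * de / S" "(1 - lam) * (1 - mu) = al * be / S"
proof -
  show S: "S \<noteq> 0" using pos unfolding S_def by (smt (verit) mult_pos_pos)
  have D: "de + be \<noteq> 0" using pos by simp
  have l: "1 - lam = al * (de + be) / S" using S unfolding lam_def S_def by (simp add: field_simps)
  show "(1 - lam) * mu = al * de / S" unfolding l mu_def using D by simp
  have m: "1 - mu = be / (de + be)" unfolding mu_def using D by (simp add: field_simps)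
  show "(1 - lam) * (1 - mu) = al * be / S" unfolding l m using D by simp
qed

lemma caseB:
  assumes face: "closed_segment (vert p) (vert q) face_of Br J"
    and p: "p \<in> S_J J" and q: "q \<in> S_J J" and qdef: "q = Transposition.transpose i l \<circ> p"
    and il: "i < l" and pa: "p a = i" and pb: "p b = l"
    and xa: "x \<noteq> a" and xb: "x \<noteq> b" and ya: "y \<noteq> a" and yb: "y \<noteq> b" and xy: "x \<noteq> y"
    and ix: "i < p x" and xy': "p x < p y" and yl: "p y < l"
    and aax: "acc J a (p x)" and bax: "acc J b (p x)" and aay: "acc J a (p y)" and bay: "acc J b (p y)"
    and xi: "acc J x i" and yl': "acc J y l" and xpy: "acc J x (p y)" and ypx: "acc J y (p x)"
  shows False
proof -
  have ab: "a \<noteq> b" using pa pb il by auto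
  have injp: "inj p" using p unfolding S_J_def by (auto intro: permutes_inj)
  have qa: "q a = l" and qb: "q b = i" and qx: "q x = p x" and qy: "q y = p y"
    using pa pb ix xy' yl by (auto simp: qdef Transposition.transpose_def)
  define rx where "rx = p \<circ> Transposition.transpose a x"
  define sx where "sx = q \<circ> Transposition.transpose b x"
  define ry where "ry = p \<circ> Transposition.transpose b y"
  define sy where "sy = q \<circ> Transposition.transpose a y"
  define t where "t = p \<circ> Transposition.transpose x y"
  define t' where "t' = q \<circ> Transposition.transpose x y"
  have rx: "rx \<in> S_J J" unfolding rx_def by (rule S_J_swap[OF p]) (use aax xi pa in auto)
  have sx: "sx \<in> S_J J" unfolding sx_def by (rule S_J_swap[OF q]) (use bax xi qb qx in auto)
  have ry: "ry \<in> S_J J" unfolding ry_def by (rule S_J_swap[OF p]) (use bay yl' pb in auto)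
  have sy: "sy \<in> S_J J" unfolding sy_def by (rule S_J_swap[OF q]) (use aay yl' qa qy in auto)
  have t: "t \<in> S_J J" unfolding t_def by (rule S_J_swap[OF p]) (use xpy ypx in auto)
  have t': "t' \<in> S_J J" unfolding t'_def by (rule S_J_swap[OF q]) (use xpy ypx qx qy in auto)
  have cv: "convex (Br J)" unfolding Br_def by simp
  have Y1: "(1/2) *\<^sub>R (vert ry + vert sy) \<in> Br J"
    using convexD[OF cv vert_in[OF ry] vert_in[OF sy], of "1/2" "1/2"] by (simp add: scaleR_add_right)
  have T: "(1/2) *\<^sub>R (vert t + vert t') \<in> Br J"
    using convexD[OF cv vert_in[OF t] vert_in[OF t'], of "1/2" "1/2"] by (simp add: scaleR_add_right)
  define I where "I = real (num i)"
  define L where "L = real (num l)"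
  define X where "X = real (num (p x))"
  define Z where "Z = real (num (p y))"
  have IX: "I < X" and XZ: "X < Z" and ZL: "Z < L" using ix xy' yl num_less
    unfolding I_def X_def Z_def L_def by auto
  define al where "al = X - I"
  define be where "be = L - Z"
  define de where "de = Z - X"
  have pos: "al > 0" "be > 0" "de > 0" using IX XZ ZL unfolding al_def be_def de_def by auto
  define S where "S = de * be + de * al + al * be"
  define mu where "mu = de / (de + be)"
  define lam where "lam = de * be / S"
  have W: "S \<noteq> 0" "(1 - lam) * mu = al * de / S" "(1 - lam) * (1 - mu) = al * be / S"
    using weights[OF pos] unfolding S_def mu_def lam_def by auto
  have mu: "0 \<le> mu" "mu \<le> 1" using pos unfolding mu_def by (auto simp: field_simps)
  have S1: "0 < de * al + al * be" using pos by (simp add: add_pos_pos)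
  have S2: "0 < de * be" using pos by simp
  have lam: "0 < lam" "lam < 1" using S1 S2 unfolding lam_def S_def by auto
  have hX: "X = I + al" and hZ: "Z = I + al + de" and hL: "L = I + al + de + be"
    unfolding al_def be_def de_def by auto
  define Y where "Y = mu *\<^sub>R ((1/2) *\<^sub>R (vert ry + vert sy)) + (1 - mu) *\<^sub>R ((1/2) *\<^sub>R (vert t + vert t'))"
  have Y: "Y \<in> Br J" unfolding Y_def using convexD[OF cv Y1 T, of mu "1 - mu"] mu by simp
  have Ea: "lam * ((X + L) / 2) + (1 - lam) * (mu * ((I + Z) / 2) + (1 - mu) * ((I + L) / 2)) = (I + L) / 2"
    by (rule comb_aux[OF W(1) lam_def W(2) W(3)]) (simp add: hX hZ hL S_def field_simps)
  have Eb: "lam * ((L + X) / 2) + (1 - lam) * (mu * ((Z + I) / 2) + (1 - mu) * ((L + I) / 2)) = (L + I) / 2"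
    by (rule comb_aux[OF W(1) lam_def W(2) W(3)]) (simp add: hX hZ hL S_def field_simps)
  have Ex: "lam * ((I + I) / 2) + (1 - lam) * (mu * ((X + X) / 2) + (1 - mu) * ((Z + Z) / 2)) = (X + X) / 2"
    by (rule comb_aux[OF W(1) lam_def W(2) W(3)]) (simp add: hX hZ hL S_def field_simps)
  have Ey: "lam * ((Z + Z) / 2) + (1 - lam) * (mu * ((L + L) / 2) + (1 - mu) * ((X + X) / 2)) = (Z + Z) / 2"
    by (rule comb_aux[OF W(1) lam_def W(2) W(3)]) (simp add: hX hZ hL S_def field_simps)
  have comp: "\<And>(u::real^'n) v w z g h j. (lam *\<^sub>R ((1/2) *\<^sub>R (u + v)) + (1 - lam) *\<^sub>R (mu *\<^sub>R ((1/2) *\<^sub>R (w + z)) + (1 - mu) *\<^sub>R ((1/2) *\<^sub>R (g + h)))) $ j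
     = lam * ((u$j + v$j)/2) + (1 - lam) * (mu * ((w$j + z$j)/2) + (1 - mu) * ((g$j + h$j)/2))"
    by (simp add: field_simps)
  have comp2: "\<And>(u::real^'n) v j. ((1/2) *\<^sub>R (u + v)) $ j = (u$j + v$j)/2" by simp
  have vc: "\<And>r j. vert r $ j = real (num (r j))" by (simp add: vert_def)
  have eq: "lam *\<^sub>R ((1/2) *\<^sub>R (vert rx + vert sx)) + (1 - lam) *\<^sub>R Y = (1/2) *\<^sub>R (vert p + vert q)"
  proof (rule vec_eq_iff[THEN iffD2], rule allI)
    fix j
    have injp: "inj p" using p unfolding S_J_def by (auto intro: permutes_inj)
    consider "j = a" | "j = b" | "j = x" | "j = y" | "j \<noteq> a \<and> j \<noteq> b \<and> j \<noteq> x \<and> j \<noteq> y" by blast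
    then show "(lam *\<^sub>R ((1/2) *\<^sub>R (vert rx + vert sx)) + (1 - lam) *\<^sub>R Y) $ j = ((1/2) *\<^sub>R (vert p + vert q)) $ j"
    proof cases
      case 1
      have v: "rx j = p x" "sx j = l" "ry j = i" "sy j = p y" "t j = i" "t' j = l" "p j = i" "q j = l"
        using 1 ab xa xb ya yb xy pa pb qa qb qx qy
        by (auto simp: rx_def sx_def ry_def sy_def t_def t'_def Transposition.transpose_def)
      show ?thesis unfolding Y_def comp comp2 vc v I_def[symmetric] L_def[symmetric] X_def[symmetric] Z_def[symmetric]
        by (rule Ea)
    next
      case 2
      have v: "rx j = l" "sx j = p x" "ry j = p y" "sy j = i" "t j = l" "t' j = i" "p j = l" "q j = i"
        using 2 ab xa xb ya yb xy pa pb qa qb qx qy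
        by (auto simp: rx_def sx_def ry_def sy_def t_def t'_def Transposition.transpose_def)
      show ?thesis unfolding Y_def comp comp2 vc v I_def[symmetric] L_def[symmetric] X_def[symmetric] Z_def[symmetric]
        by (rule Eb)
    next
      case 3
      have v: "rx j = i" "sx j = i" "ry j = p x" "sy j = p x" "t j = p y" "t' j = p y" "p j = p x" "q j = p x"
        using 3 ab xa xb ya yb xy pa pb qa qb qx qy
        by (auto simp: rx_def sx_def ry_def sy_def t_def t'_def Transposition.transpose_def)
      show ?thesis unfolding Y_def comp comp2 vc v I_def[symmetric] L_def[symmetric] X_def[symmetric] Z_def[symmetric]
        by (rule Ex)
    next
      case 4
      have v: "rx j = p y" "sx j = p y" "ry j = l" "sy j = l" "t j = p x" "t' j = p x" "p j = p y" "q j = p y"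
        using 4 ab xa xb ya yb xy pa pb qa qb qx qy
        by (auto simp: rx_def sx_def ry_def sy_def t_def t'_def Transposition.transpose_def)
      show ?thesis unfolding Y_def comp comp2 vc v I_def[symmetric] L_def[symmetric] X_def[symmetric] Z_def[symmetric]
        by (rule Ey)
    next
      case 5
      have "p j \<noteq> i" "p j \<noteq> l" using 5 pa pb injD[OF injp] by metis+
      then have "q j = p j" unfolding qdef Transposition.transpose_def by simp
      then show ?thesis using 5
        unfolding Y_def rx_def sx_def ry_def sy_def t_def t'_def
        by (simp add: vert_def Transposition.transpose_def algebra_simps)
    qed
  qed
  have nr: "vert rx \<notin> closed_segment (vert p) (vert q)"
    by (rule not_in_seg[of q x p]) (use qx ix pa in \<open>auto simp: rx_def Transposition.transpose_def\<close>)
  show False by (rule face_contra[OF face rx sx Y lam eq nr])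
qed


theorem proposition4p6:
  fixes J :: "'n::{finite,linorder} set" and p q :: "'n \<Rightarrow> 'n" and i l :: 'n
  assumes "p \<in> S_J J" and "q \<in> S_J J"
    and "i < l"
    and "q = Transposition.transpose i l \<circ> p"
    and "joined_by_edge (Br J) (vert p) (vert q)"
  shows "\<forall>k. i < k \<and> k < l \<longrightarrow> p k = k \<and> q k = k"
proof (intro allI impI)
  note p = assms(1) and q = assms(2) and il = assms(3) and qdef = assms(4)
  fix k assume k: "i < k \<and> k < l"
  show "p k = k \<and> q k = k"
  proof (rule ccontr)
    assume nk: "\<not> (p k = k \<and> q k = k)"
    have face: "closed_segment (vert p) (vert q) face_of Br J"
      using assms(5) unfolding joined_by_edge_def by simp
    have pp: "p permutes UNIV" using p unfolding S_J_def by simp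
    have injp: "inj p" using pp by (rule permutes_inj)
    have surjp: "surj p" using pp by (rule permutes_surj)
    define a where "a = inv p i"
    define b where "b = inv p l"
    have pa: "p a = i" unfolding a_def using surjp by (simp add: surj_f_inv_f)
    have pb: "p b = l" unfolding b_def using surjp by (simp add: surj_f_inv_f)
    have qa: "q a = l" and qb: "q b = i" using pa pb by (auto simp: qdef Transposition.transpose_def)
    have pk: "p k \<noteq> k"
    proof
      assume "p k = k"
      then have "q k = k" using k by (auto simp: qdef Transposition.transpose_def)
      with nk \<open>p k = k\<close> show False by simp
    qed
    have accA: "acc J a v" if "i \<le> v" "v \<le> l" for v
    proof -
      have h1: "a \<in> J \<longrightarrow> a \<le> i" using S_J_acc[OF p, of a] pa by (simp add: acc_def)
      have h2: "a \<notin> J \<longrightarrow> l \<le> a" using S_J_acc[OF q, of a] qa by (simp add: acc_def)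
      show ?thesis unfolding acc_def using h1 h2 that by (meson order_trans)
    qed
    have accB: "acc J b v" if "i \<le> v" "v \<le> l" for v
    proof -
      have h1: "b \<in> J \<longrightarrow> b \<le> i" using S_J_acc[OF q, of b] qb by (simp add: acc_def)
      have h2: "b \<notin> J \<longrightarrow> l \<le> b" using S_J_acc[OF p, of b] pb by (simp add: acc_def)
      show ?thesis unfolding acc_def using h1 h2 that by (meson order_trans)
    qed
    show False
    proof (cases "\<exists>c. i < p c \<and> p c < l \<and> \<not> (i < c \<and> c < l)")
      case True
      then obtain c where c: "i < p c" "p c < l" "\<not> (i < c \<and> c < l)" by blast
      have ca: "c \<noteq> a" and cb: "c \<noteq> b" using c pa pb by auto
      have pc: "acc J c (p c)" using S_J_acc[OF p] .
      have cc: "c \<le> i \<or> l \<le> c" using c(3) by auto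
      have h1: "c \<in> J \<longrightarrow> c \<le> i"
      proof
        assume "c \<in> J"
        then have "c \<le> p c" using pc by (simp add: acc_def)
        then show "c \<le> i" using cc c(2) by (meson leD order_trans)
      qed
      have h2: "c \<notin> J \<longrightarrow> l \<le> c"
      proof
        assume "c \<notin> J"
        then have "p c \<le> c" using pc by (simp add: acc_def)
        then show "l \<le> c" using cc c(1) by (meson leD order_trans)
      qed
      have accC: "acc J c v" if "i \<le> v" "v \<le> l" for v
        unfolding acc_def using h1 h2 that by (meson order_trans)
      show False
        by (rule caseA[OF face p q qdef il pa pb ca cb c(1) c(2)],
            simp_all add: accA accB accC less_imp_le c(1,2) il)
    next
      case False
      define Iv where "Iv = {z. i < z \<and> z < l}"
      have sub: "p -` Iv \<subseteq> Iv" using False unfolding Iv_def by auto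
      have "card (p -` Iv) = card Iv" using injp surjp by (intro card_vimage_inj) auto
      then have "p -` Iv = Iv" using sub by (intro card_subset_eq) auto
      then have pI: "i < p z \<and> p z < l" if "i < z" "z < l" for z
        using that unfolding Iv_def by blast
      define Mv where "Mv = {z. i < z \<and> z < l \<and> p z \<noteq> z}"
      have kM: "k \<in> Mv" using k pk unfolding Mv_def by simp
      define y where "y = Min Mv"
      have yM: "y \<in> Mv" unfolding y_def using kM by (intro Min_in) auto
      have ymin: "\<And>z. z \<in> Mv \<Longrightarrow> y \<le> z" unfolding y_def by auto
      have fix_below: "p z = z" if "i < z" "z < y" for z
      proof (rule ccontr)
        assume "p z \<noteq> z"
        then have "z \<in> Mv" using that yM unfolding Mv_def by auto
        then show False using ymin that(2) by fastforce
      qed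
      have y: "i < y" "y < l" "p y \<noteq> y" using yM unfolding Mv_def by auto
      have pyI: "i < p y" "p y < l" using pI y by auto
      have ypy: "y < p y"
      proof (rule ccontr)
        assume "\<not> y < p y"
        then have "p y < y" using y(3) by auto
        then have "p (p y) = p y" using fix_below pyI by auto
        then have "p y = y" using injD[OF injp] by blast
        with y(3) show False by simp
      qed
      define A where "A = {z. y \<le> z \<and> z < p y}"
      have "\<exists>x. p x \<in> A \<and> x \<notin> A"
      proof (rule ccontr)
        assume "\<not> (\<exists>x. p x \<in> A \<and> x \<notin> A)"
        then have subA: "p -` A \<subseteq> A" by auto
        have "card (p -` A) = card A" using injp surjp by (intro card_vimage_inj) auto
        then have "p -` A = A" using subA by (intro card_subset_eq) auto
        moreover have "y \<in> A" using ypy unfolding A_def by simp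
        ultimately have "p y \<in> A" by blast
        then show False unfolding A_def by simp
      qed
      then obtain x where xA: "p x \<in> A" and xnA: "x \<notin> A" by blast
      have pxA: "y \<le> p x" "p x < p y" using xA unfolding A_def by auto
      have ix: "i < p x" using pxA y by auto
      have xl: "p x < l" using pxA pyI by auto
      have xI: "i < x" "x < l" using False ix xl by auto
      have pyx: "p y \<le> x"
      proof (rule ccontr)
        assume "\<not> p y \<le> x"
        then have "x < p y" by simp
        show False
        proof (cases "x < y")
          case True
          then have "p x = x" using fix_below xI by auto
          then show False using xA xnA by simp
        next
          case False
          then show False using xnA \<open>x < p y\<close> unfolding A_def by auto
        qed
      qed
      have xy: "x \<noteq> y" using pyx ypy by auto
      have xa: "x \<noteq> a" and xb: "x \<noteq> b" using ix xl pa pb by auto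
      have ya: "y \<noteq> a" and yb: "y \<noteq> b" using pyI pa pb by auto
      have xJ: "x \<notin> J"
      proof
        assume "x \<in> J"
        then have "x \<le> p x" using S_J_acc[OF p, of x] unfolding acc_def by auto
        then show False using pxA pyx by auto
      qed
      have yJ: "y \<in> J"
      proof (rule ccontr)
        assume "y \<notin> J"
        then have "p y \<le> y" using S_J_acc[OF p, of y] unfolding acc_def by auto
        then show False using ypy by auto
      qed
      show False
      proof (rule caseB[OF face p q qdef il pa pb xa xb ya yb xy ix pxA(2) pyI(2)])
        show "acc J a (p x)" "acc J b (p x)" "acc J a (p y)" "acc J b (p y)"
          using ix xl pyI by (auto intro!: accA accB simp: less_imp_le)
        show "acc J x i" "acc J x (p y)" using xJ xI pyx unfolding acc_def by auto
        show "acc J y l" "acc J y (p x)" using yJ y pxA unfolding acc_def by auto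
      qed
    qed
  qed
qed

end
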